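(* Let $u$ be the solution of the Cauchy problem in the context. Then for every $t>0$ and all $x\in[0,1]$, \[ 0\le\partial_xu(x,t)\le e^{(\sigma-m_0f_0-m_1f_1)t}. \]
   Context: Constants: $f_0>0$, $f_1\ge0$ with selection rate $\sigma=f_0-f_1>0$; $\lambda_0,\lambda_1\ge0$; $\gamma_0,\gamma_1\in(0,1]$; $m_0=\lambda_0\gamma_0$, $m_1=\lambda_1\gamma_1$. With $\mathcal{J}_0u(x,t)=u(x+\gamma_0(1-x),t)-u(x,t)$ and $\mathcal{J}_1u(x,t)=u(x-\gamma_1x,t)-u(x,t)$, $u$ is the unique (mild) solution, which is $C^\infty$ on $[0,1]\times[0,\infty)$, of \[ \partial_tu+\sigma(1-x)x\,\partial_xu=\lambda_0f_0\mathcal{J}_0u+\lambda_1f_1\mathcal{J}_1u\ (0\le x\le1,\ t>0),\quad u(x,0)=x. \] *)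

theory Defs
  imports "HOL-Analysis.Analysis"
begin

definition dom01 :: "(real \<times> real) set" where
  "dom01 = {0..1} \<times> {0..}"

definition J0 :: "real \<Rightarrow> (real \<Rightarrow> real \<Rightarrow> real) \<Rightarrow> real \<Rightarrow> real \<Rightarrow> real" where
  "J0 g0 u x t = u (x + g0 * (1 - x)) t - u x t"

definition J1 :: "real \<Rightarrow> (real \<Rightarrow> real \<Rightarrow> real) \<Rightarrow> real \<Rightarrow> real \<Rightarrow> real" where
  "J1 g1 u x t = u (x - g1 * x) t - u x t"

text \<open>
  u is a (classical) solution of the Cauchy problem which is C^2 on [0,1] x [0,infinity)
  (the paper's solution is C^infinity there).  ux, ut are its partial derivatives,
  uxx, uxt the second partial derivatives of ux; all derivatives are taken jointly
  (Frechet) in (x,t), one-sidedly at the boundary, i.e. within dom01.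
\<close>
definition classical_solution ::
  "real \<Rightarrow> real \<Rightarrow> real \<Rightarrow> real \<Rightarrow> real \<Rightarrow> real \<Rightarrow>
   (real \<Rightarrow> real \<Rightarrow> real) \<Rightarrow> (real \<Rightarrow> real \<Rightarrow> real) \<Rightarrow> (real \<Rightarrow> real \<Rightarrow> real) \<Rightarrow>
   (real \<Rightarrow> real \<Rightarrow> real) \<Rightarrow> (real \<Rightarrow> real \<Rightarrow> real) \<Rightarrow> bool" where
  "classical_solution f0 f1 l0 l1 g0 g1 u ux ut uxx uxt \<longleftrightarrow>
     (\<forall>(x,t)\<in>dom01.
        ((\<lambda>p. u (fst p) (snd p)) has_derivative (\<lambda>(h,k). ux x t * h + ut x t * k))
          (at (x,t) within dom01)
      \<and> ((\<lambda>p. ux (fst p) (snd p)) has_derivative (\<lambda>(h,k). uxx x t * h + uxt x t * k))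
          (at (x,t) within dom01))
   \<and> continuous_on dom01 (\<lambda>p. ut (fst p) (snd p))
   \<and> continuous_on dom01 (\<lambda>p. uxx (fst p) (snd p))
   \<and> continuous_on dom01 (\<lambda>p. uxt (fst p) (snd p))
   \<and> (\<forall>x\<in>{0..1}. \<forall>t>0.
        ut x t + (f0 - f1) * (1 - x) * x * ux x t
          = l0 * f0 * J0 g0 u x t + l1 * f1 * J1 g1 u x t)
   \<and> (\<forall>x\<in>{0..1}. u x 0 = x)"

end

theory Submission
  imports Defs
begin

lemma minprin:
  fixes \<Phi> :: "real \<Rightarrow> real \<Rightarrow> real \<Rightarrow> real" and T3 :: "(real \<times> real \<times> real) set"
  defines "T3 \<equiv> {q. 0 \<le> fst q \<and> fst q \<le> fst (snd q) \<and> fst (snd q) \<le> 1 \<and> 0 \<le> snd (snd q)}"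
  assumes cont: "continuous_on T3 (\<lambda>q. \<Phi> (fst q) (fst (snd q)) (snd (snd q)))"
  and init: "\<And>x y. 0 \<le> x \<Longrightarrow> x \<le> y \<Longrightarrow> y \<le> 1 \<Longrightarrow> 0 \<le> \<Phi> x y 0"
  and diag: "\<And>x t. 0 \<le> x \<Longrightarrow> x \<le> 1 \<Longrightarrow> 0 \<le> t \<Longrightarrow> 0 \<le> \<Phi> x x t"
  and step: "\<And>x y t. 0 \<le> x \<Longrightarrow> x < y \<Longrightarrow> y \<le> 1 \<Longrightarrow> 0 < t \<Longrightarrow>
     (\<And>x' y'. 0 \<le> x' \<Longrightarrow> x' \<le> y' \<Longrightarrow> y' \<le> 1 \<Longrightarrow> \<Phi> x y t \<le> \<Phi> x' y' t) \<Longrightarrow>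
     \<exists>D\<ge>0. ((\<lambda>s. \<Phi> x y s) has_real_derivative D) (at t)"
  and x0: "0 \<le> x0" "x0 \<le> y0" "y0 \<le> 1" "0 \<le> T"
  shows "0 \<le> \<Phi> x0 y0 T"
proof (rule ccontr)
  assume "\<not> 0 \<le> \<Phi> x0 y0 T"
  hence neg: "\<Phi> x0 y0 T < 0" by simp
  define \<epsilon> where "\<epsilon> = - \<Phi> x0 y0 T / (2 * exp T)"
  have epos: "\<epsilon> > 0" using neg unfolding \<epsilon>_def by (simp add: divide_neg_pos)
  have eT: "\<Phi> x0 y0 T + \<epsilon> * exp T < 0" unfolding \<epsilon>_def using neg by simp
  define \<Psi> where "\<Psi> = (\<lambda>q::real\<times>real\<times>real. \<Phi> (fst q) (fst (snd q)) (snd (snd q)) + \<epsilon> * exp (snd (snd q)))"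
  have Pcont: "continuous_on T3 \<Psi>" unfolding \<Psi>_def
    by (intro continuous_on_add cont continuous_intros)
  have cT3: "closed T3" unfolding T3_def
    by (intro closed_Collect_conj closed_Collect_le continuous_intros)
  define K where "K = {q \<in> T3 \<inter> {q. snd (snd q) \<le> T}. \<Psi> q \<le> (\<lambda>_. 0) q}"
  have cK: "closed K" unfolding K_def
    by (intro continuous_on_closed_Collect_le closed_Int cT3 closed_Collect_le continuous_intros
        continuous_on_subset[OF Pcont]) auto
  have "K \<subseteq> {0..1} \<times> {0..1} \<times> {0..T}" unfolding K_def T3_def by auto
  hence "K = ({0..1} \<times> {0..1} \<times> {0..T}) \<inter> K" by blast
  hence compK: "compact K" using cK by (metis compact_Int_closed compact_Times compact_Icc)
  have inK: "(x0, y0, T) \<in> K" unfolding K_def T3_def \<Psi>_def using x0 eT by auto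
  obtain q where qK: "q \<in> K" and qmin: "\<forall>q'\<in>K. snd (snd q) \<le> snd (snd q')"
  proof -
    have "continuous_on K (\<lambda>q::real\<times>real\<times>real. snd (snd q))" by (intro continuous_intros)
    moreover have "K \<noteq> {}" using inK by blast
    ultimately show ?thesis using continuous_attains_inf[OF compK] that by blast
  qed
  obtain x y t where q: "q = (x, y, t)" by (cases q) auto
  have xy: "0 \<le> x" "x \<le> y" "y \<le> 1" "0 \<le> t" "t \<le> T" and Pq: "\<Phi> x y t + \<epsilon> * exp t \<le> 0"
    using qK unfolding q K_def T3_def \<Psi>_def by auto
  have tpos: "t > 0"
  proof (rule ccontr)
    assume "\<not> t > 0" hence "t = 0" using xy by simp
    thus False using init[OF xy(1-3)] Pq epos by simp
  qed
  have xlty: "x < y"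
  proof (rule ccontr)
    assume "\<not> x < y" hence "x = y" using xy by simp
    thus False using diag[of x t] xy Pq epos by (smt (verit) exp_gt_zero mult_pos_pos)
  qed
  have minim: "\<Phi> x y t \<le> \<Phi> x' y' t" if h: "0 \<le> x'" "x' \<le> y'" "y' \<le> 1" for x' y'
  proof (rule ccontr)
    assume "\<not> \<Phi> x y t \<le> \<Phi> x' y' t"
    hence lt: "\<Psi> (x', y', t) < 0" using Pq unfolding \<Psi>_def by simp
    have "(x', y', t) \<in> T3" unfolding T3_def using h xy by auto
    then obtain \<delta> where dpos: "\<delta> > 0" and dd: "\<forall>q'\<in>T3. dist q' (x', y', t) < \<delta> \<longrightarrow>
        dist (\<Psi> q') (\<Psi> (x', y', t)) < - \<Psi> (x', y', t)"
      using Pcont lt unfolding continuous_on_iff by (metis neg_0_less_iff_less)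
    define h where "h = min \<delta> t / 2"
    have hpos: "h > 0" "h < \<delta>" "h < t" unfolding h_def using dpos tpos by auto
    have inT: "(x', y', t - h) \<in> T3" unfolding T3_def using h hpos by auto
    have "dist (x', y', t - h) (x', y', t) = h" using hpos by (simp add: dist_Pair_Pair dist_real_def)
    hence "dist (\<Psi> (x', y', t - h)) (\<Psi> (x', y', t)) < - \<Psi> (x', y', t)" using dd inT hpos by auto
    hence "\<Psi> (x', y', t - h) < 0" by (simp add: dist_real_def)
    hence "(x', y', t - h) \<in> K" unfolding K_def using inT xy hpos by auto
    thus False using qmin hpos unfolding q by fastforce
  qed
  obtain D where D0: "D \<ge> 0" and DD: "((\<lambda>s. \<Phi> x y s) has_real_derivative D) (at t)"
    using step[OF xy(1) xlty xy(3) tpos minim] by blast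
  have "((\<lambda>s. \<Phi> x y s + \<epsilon> * exp s) has_real_derivative D + \<epsilon> * exp t) (at t)"
    using DERIV_add[OF DD DERIV_cmult[OF DERIV_exp, of \<epsilon> t]] by simp
  moreover have "D + \<epsilon> * exp t > 0" using D0 epos by (simp add: add_nonneg_pos)
  ultimately obtain d where dpos: "d > 0" and dec: "\<forall>h>0. h < d \<longrightarrow>
      \<Phi> x y (t - h) + \<epsilon> * exp (t - h) < \<Phi> x y t + \<epsilon> * exp t"
    using DERIV_pos_inc_left by blast
  define h where "h = min d t / 2"
  have hpos: "h > 0" "h < d" "h < t" unfolding h_def using dpos tpos by auto
  have "\<Phi> x y (t - h) + \<epsilon> * exp (t - h) < 0" using dec hpos Pq by fastforce
  hence "(x, y, t - h) \<in> K" unfolding K_def T3_def \<Psi>_def using xy hpos by auto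
  thus False using qmin hpos unfolding q by fastforce
qed

lemma ident_lemma:
  fixes p c E y x s uty utx \<sigma> l0 f0 l1 f1 g0 g1 uxx uxy A B Cc Dd uy ux :: real
  assumes gx: "\<sigma> * (1 - x) * x * (p * E + s * uxx) = 0"
    and gy: "\<sigma> * (1 - y) * y * (p * E + s * uxy) = 0"
    and px: "utx = l0 * f0 * (A - ux) + l1 * f1 * (Cc - ux) - \<sigma> * (1 - x) * x * uxx"
    and py: "uty = l0 * f0 * (B - uy) + l1 * f1 * (Dd - uy) - \<sigma> * (1 - y) * y * uxy"
    and c: "c = \<sigma> - l0 * g0 * f0 - l1 * g1 * f1"
  shows "p * (c * E) * (y - x) + s * (uty - utx) =
       p * E * \<sigma> * (y - x) * (2 - x - y)
       + l0 * f0 * ((p * E * ((y + g0 * (1 - y)) - (x + g0 * (1 - x))) + s * (B - A))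
                    - (p * E * (y - x) + s * (uy - ux)))
       + l1 * f1 * ((p * E * ((y - g1 * y) - (x - g1 * x)) + s * (Dd - Cc))
                    - (p * E * (y - x) + s * (uy - ux)))"
proof -
  have gx': "\<sigma> * (1 - x) * x * s * uxx = - \<sigma> * (1 - x) * x * p * E" using gx by (simp add: algebra_simps)
  have gy': "\<sigma> * (1 - y) * y * s * uxy = - \<sigma> * (1 - y) * y * p * E" using gy by (simp add: algebra_simps)
  have "s * (uty - utx) = s * (l0 * f0 * (B - uy) + l1 * f1 * (Dd - uy)) - s * (l0 * f0 * (A - ux) + l1 * f1 * (Cc - ux))
     - \<sigma> * (1 - y) * y * s * uxy + \<sigma> * (1 - x) * x * s * uxx"
    unfolding px py by (simp add: algebra_simps)
  also have "\<dots> = s * (l0 * f0 * (B - uy) + l1 * f1 * (Dd - uy)) - s * (l0 * f0 * (A - ux) + l1 * f1 * (Cc - ux))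
     + \<sigma> * (1 - y) * y * p * E - \<sigma> * (1 - x) * x * p * E"
    unfolding gx' gy' by simp
  finally show ?thesis unfolding c by (simp add: algebra_simps)
qed

lemma mono_deriv:
  fixes g :: "real \<Rightarrow> real"
  assumes d: "(g has_real_derivative D) (at x within {0..1})" and x: "x \<in> {0..1}"
    and m: "\<And>a b. 0 \<le> a \<Longrightarrow> a \<le> b \<Longrightarrow> b \<le> 1 \<Longrightarrow> g a \<le> g b"
  shows "0 \<le> D"
proof -
  have lim: "((\<lambda>y. (g y - g x) / (y - x)) \<longlongrightarrow> D) (at x within {0..1})"
    using d has_field_derivative_iff by blast
  have ev: "eventually (\<lambda>y. 0 \<le> (g y - g x) / (y - x)) (at x within {0..1})"
    unfolding eventually_at
  proof (intro exI[of _ 1] conjI ballI impI)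
    fix y :: real assume y: "y \<in> {0..1}" "y \<noteq> x \<and> dist y x < 1"
    show "0 \<le> (g y - g x) / (y - x)"
    proof (cases "x < y")
      case True thus ?thesis using m[of x y] x y by (auto intro!: divide_nonneg_pos)
    next
      case False hence "y < x" using y by auto
      thus ?thesis using m[of y x] x y by (auto intro!: divide_nonpos_neg)
    qed
  qed simp
  have "at x within {0..1::real} \<noteq> bot" using x by (simp add: trivial_limit_within)
  thus ?thesis using tendsto_lowerbound[OF lim ev] by blast
qed

theorem lemma4p2:
  fixes f0 f1 l0 l1 g0 g1 :: real
    and u ux ut uxx uxt :: "real \<Rightarrow> real \<Rightarrow> real"
  assumes "f0 > 0" and "f1 \<ge> 0" and "f0 - f1 > 0"
    and "l0 \<ge> 0" and "l1 \<ge> 0"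
    and "0 < g0" and "g0 \<le> 1" and "0 < g1" and "g1 \<le> 1"
    and "classical_solution f0 f1 l0 l1 g0 g1 u ux ut uxx uxt"
  shows "\<forall>t>0. \<forall>x\<in>{0..1}.
           0 \<le> ux x t \<and>
           ux x t \<le> exp (((f0 - f1) - (l0 * g0) * f0 - (l1 * g1) * f1) * t)"
proof -
  note cs = assms(10)[unfolded classical_solution_def]
  have Dall: "\<And>x t. x \<in> {0..1} \<Longrightarrow> t \<ge> 0 \<Longrightarrow>
     ((\<lambda>p. u (fst p) (snd p)) has_derivative (\<lambda>(h,k). ux x t * h + ut x t * k)) (at (x,t) within dom01)"
    using cs unfolding dom01_def by fastforce
  have pde: "\<And>x t. x \<in> {0..1} \<Longrightarrow> t > 0 \<Longrightarrow> ut x t + (f0 - f1) * (1 - x) * x * ux x t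
          = l0 * f0 * J0 g0 u x t + l1 * f1 * J1 g1 u x t" using cs by blast
  have u0: "\<And>x. x \<in> {0..1} \<Longrightarrow> u x 0 = x" using cs by blast
  have dxw: "((\<lambda>\<xi>. u \<xi> t) has_real_derivative ux x t) (at x within {0..1})"
    if "x \<in> {0..1}" "t \<ge> 0" for x t
  proof -
    have f: "((\<lambda>\<xi>. (\<xi>, t)) has_derivative (\<lambda>h. (h, 0))) (at x within {0..1})"
      by (auto intro!: derivative_eq_intros)
    have sub: "(\<lambda>\<xi>. (\<xi>, t)) ` {0..1} \<subseteq> dom01" using that unfolding dom01_def by auto
    have "((\<lambda>p. u (fst p) (snd p)) has_derivative (\<lambda>(h,k). ux x t * h + ut x t * k))
       (at ((\<lambda>\<xi>. (\<xi>, t)) x) within (\<lambda>\<xi>. (\<xi>, t)) ` {0..1})"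
      using has_derivative_subset[OF Dall[OF that] sub] by simp
    from diff_chain_within[OF f this]
    have "((\<lambda>\<xi>. u \<xi> t) has_derivative (\<lambda>h. ux x t * h)) (at x within {0..1})" by (simp add: o_def)
    thus ?thesis by (simp add: has_field_derivative_def)
  qed
  have dtw: "((\<lambda>s. u x s) has_real_derivative ut x t) (at t within {0..})"
    if "x \<in> {0..1}" "t \<ge> 0" for x t
  proof -
    have f: "((\<lambda>s. (x, s)) has_derivative (\<lambda>h. (0, h))) (at t within {0..})"
      by (auto intro!: derivative_eq_intros)
    have sub: "(\<lambda>s. (x, s)) ` {0..} \<subseteq> dom01" using that unfolding dom01_def by auto
    have "((\<lambda>p. u (fst p) (snd p)) has_derivative (\<lambda>(h,k). ux x t * h + ut x t * k))
       (at ((\<lambda>s. (x, s)) t) within (\<lambda>s. (x, s)) ` {0..})"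
      using has_derivative_subset[OF Dall[OF that] sub] by simp
    from diff_chain_within[OF f this]
    have "((\<lambda>s. u x s) has_derivative (\<lambda>h. ut x t * h)) (at t within {0..})" by (simp add: o_def)
    thus ?thesis by (simp add: has_field_derivative_def)
  qed
  have dxat: "((\<lambda>\<xi>. u \<xi> t) has_real_derivative ux x t) (at x)" if "0 < x" "x < 1" "t \<ge> 0" for x t
    using dxw[of x t] that at_within_interior[of x "{0..1}"] by (simp add: interior_atLeastAtMost_real)
  have dtat: "((\<lambda>s. u x s) has_real_derivative ut x t) (at t)" if "x \<in> {0..1}" "t > 0" for x t
    using dtw[of x t] that at_within_interior[of t "{0..}"] by (simp add: interior_real_atLeast)
  have ucont: "continuous_on dom01 (\<lambda>p. u (fst p) (snd p))"
    unfolding continuous_on_eq_continuous_within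
  proof
    fix p assume "p \<in> dom01"
    then obtain x t where p: "p = (x, t)" "x \<in> {0..1}" "t \<ge> 0" unfolding dom01_def by auto
    show "continuous (at p within dom01) (\<lambda>p. u (fst p) (snd p))"
      using has_derivative_continuous[OF Dall[OF p(2,3)]] p(1) by simp
  qed
  define \<sigma> where "\<sigma> = f0 - f1"
  define c where "c = (f0 - f1) - (l0 * g0) * f0 - (l1 * g1) * f1"
  have gen: "0 \<le> p * exp (c * T) * (y - x) + s * (u y T - u x T)"
    if ps: "p \<ge> 0" "p + s \<ge> 0" and xy: "0 \<le> x" "x \<le> y" "y \<le> 1" "0 \<le> T" for p s x y T
  proof (rule minprin[where \<Phi> = "\<lambda>x y t. p * exp (c * t) * (y - x) + s * (u y t - u x t)", OF _ _ _ _ xy])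
    let ?T3 = "{q::real\<times>real\<times>real. 0 \<le> fst q \<and> fst q \<le> fst (snd q) \<and> fst (snd q) \<le> 1 \<and> 0 \<le> snd (snd q)}"
    have c1: "continuous_on ?T3 (\<lambda>q. u (fst (snd q)) (snd (snd q)))"
      by (rule continuous_on_compose2[OF ucont, of _ "\<lambda>q. (fst (snd q), snd (snd q))", simplified])
         (auto intro!: continuous_intros simp: dom01_def)
    have c2: "continuous_on ?T3 (\<lambda>q. u (fst q) (snd (snd q)))"
      by (rule continuous_on_compose2[OF ucont, of _ "\<lambda>q. (fst q, snd (snd q))", simplified])
         (auto intro!: continuous_intros simp: dom01_def)
    show "continuous_on ?T3 (\<lambda>q. p * exp (c * snd (snd q)) * (fst (snd q) - fst q)
          + s * (u (fst (snd q)) (snd (snd q)) - u (fst q) (snd (snd q))))"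
      by (intro continuous_intros c1 c2)
  next
    fix x y :: real assume a: "0 \<le> x" "x \<le> y" "y \<le> 1"
    show "0 \<le> p * exp (c * 0) * (y - x) + s * (u y 0 - u x 0)"
    proof -
      have "0 \<le> (p + s) * (y - x)" using a ps by simp
      thus ?thesis using u0[of x] u0[of y] a by (simp add: algebra_simps)
    qed
  next
    fix x t :: real
    show "0 \<le> p * exp (c * t) * (x - x) + s * (u x t - u x t)" by simp
  next
    fix x y t :: real
    assume xy: "0 \<le> x" "x < y" "y \<le> 1" "0 < t"
      and M: "\<And>x' y'. 0 \<le> x' \<Longrightarrow> x' \<le> y' \<Longrightarrow> y' \<le> 1 \<Longrightarrow>
         p * exp (c * t) * (y - x) + s * (u y t - u x t) \<le> p * exp (c * t) * (y' - x') + s * (u y' t - u x' t)"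
    define E where "E = exp (c * t)"
    have gx: "\<sigma> * (1 - x) * x * (p * E + s * ux x t) = 0"
    proof (cases "x = 0")
      case False
      hence x01: "0 < x" "x < 1" using xy by auto
      have d1: "((\<lambda>\<xi>. p * E * (y - \<xi>) + s * (u y t - u \<xi> t)) has_real_derivative
               (- (p * E) - s * ux x t)) (at x)"
        using dxat[OF x01] xy by (auto intro!: derivative_eq_intros)
      have m1: "\<forall>\<xi>. \<bar>x - \<xi>\<bar> < min x (y - x) \<longrightarrow>
          p * E * (y - x) + s * (u y t - u x t) \<le> p * E * (y - \<xi>) + s * (u y t - u \<xi> t)"
        using M[of _ y] xy unfolding E_def by auto
      have "- (p * E) - s * ux x t = 0"
        by (rule DERIV_local_min[OF d1 _ m1]) (use x01 xy in auto)
      hence "p * E + s * ux x t = 0" by linarith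
      thus ?thesis by simp
    qed simp
    have gy: "\<sigma> * (1 - y) * y * (p * E + s * ux y t) = 0"
    proof (cases "y = 1")
      case False
      hence y01: "0 < y" "y < 1" using xy by auto
      have d1: "((\<lambda>\<eta>. p * E * (\<eta> - x) + s * (u \<eta> t - u x t)) has_real_derivative
               (p * E + s * ux y t)) (at y)"
        using dxat[OF y01] xy by (auto intro!: derivative_eq_intros)
      have m1: "\<forall>\<eta>. \<bar>y - \<eta>\<bar> < min (y - x) (1 - y) \<longrightarrow>
          p * E * (y - x) + s * (u y t - u x t) \<le> p * E * (\<eta> - x) + s * (u \<eta> t - u x t)"
        using M[of x] xy unfolding E_def by auto
      have "p * E + s * ux y t = 0"
        by (rule DERIV_local_min[OF d1 _ m1]) (use y01 xy in auto)
      thus ?thesis by simp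
    qed simp
    have dt: "((\<lambda>\<tau>. p * exp (c * \<tau>) * (y - x) + s * (u y \<tau> - u x \<tau>)) has_real_derivative
        (p * (c * E) * (y - x) + s * (ut y t - ut x t))) (at t)"
      using dtat[of y t] dtat[of x t] xy unfolding E_def by (auto intro!: derivative_eq_intros)
    have Mx0: "p * E * (y - x) + s * (u y t - u x t) \<le>
        p * E * ((y + g0 * (1 - y)) - (x + g0 * (1 - x))) + s * (u (y + g0 * (1 - y)) t - u (x + g0 * (1 - x)) t)"
    proof -
      have h1: "0 \<le> g0 * (1 - x)" using xy assms(6) by simp
      have h2: "0 \<le> (1 - g0) * (y - x)" using xy assms(7) by simp
      have h3: "0 \<le> (1 - g0) * (1 - y)" using xy assms(7) by simp
      have e2: "(y + g0 * (1 - y)) - (x + g0 * (1 - x)) = (1 - g0) * (y - x)" by (simp add: algebra_simps)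
      have e3: "1 - (y + g0 * (1 - y)) = (1 - g0) * (1 - y)" by (simp add: algebra_simps)
      have b1: "0 \<le> x + g0 * (1 - x)" using h1 xy by linarith
      have b2: "x + g0 * (1 - x) \<le> y + g0 * (1 - y)" using h2 e2 by linarith
      have b3: "y + g0 * (1 - y) \<le> 1" using h3 e3 by linarith
      show ?thesis using M[OF b1 b2 b3] unfolding E_def .
    qed
    have Mx1: "p * E * (y - x) + s * (u y t - u x t) \<le>
        p * E * ((y - g1 * y) - (x - g1 * x)) + s * (u (y - g1 * y) t - u (x - g1 * x) t)"
    proof -
      have h1: "0 \<le> (1 - g1) * x" using xy assms(9) by simp
      have h2: "0 \<le> (1 - g1) * (y - x)" using xy assms(9) by simp
      have h3: "0 \<le> g1 * y" using xy assms(8) by simp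
      have e1: "x - g1 * x = (1 - g1) * x" by (simp add: algebra_simps)
      have e2: "(y - g1 * y) - (x - g1 * x) = (1 - g1) * (y - x)" by (simp add: algebra_simps)
      have b1: "0 \<le> x - g1 * x" using h1 e1 by linarith
      have b2: "x - g1 * x \<le> y - g1 * y" using h2 e2 by linarith
      have b3: "y - g1 * y \<le> 1" using h3 xy by linarith
      show ?thesis using M[OF b1 b2 b3] unfolding E_def .
    qed
    have px: "ut x t + \<sigma> * (1 - x) * x * ux x t = l0 * f0 * (u (x + g0 * (1 - x)) t - u x t) + l1 * f1 * (u (x - g1 * x) t - u x t)"
      using pde[of x t] xy unfolding \<sigma>_def J0_def J1_def by auto
    have py: "ut y t + \<sigma> * (1 - y) * y * ux y t = l0 * f0 * (u (y + g0 * (1 - y)) t - u y t) + l1 * f1 * (u (y - g1 * y) t - u y t)"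
      using pde[of y t] xy unfolding \<sigma>_def J0_def J1_def by auto
    have ident: "p * (c * E) * (y - x) + s * (ut y t - ut x t) =
       p * E * \<sigma> * (y - x) * (2 - x - y)
       + l0 * f0 * ((p * E * ((y + g0 * (1 - y)) - (x + g0 * (1 - x))) + s * (u (y + g0 * (1 - y)) t - u (x + g0 * (1 - x)) t))
                    - (p * E * (y - x) + s * (u y t - u x t)))
       + l1 * f1 * ((p * E * ((y - g1 * y) - (x - g1 * x)) + s * (u (y - g1 * y) t - u (x - g1 * x) t))
                    - (p * E * (y - x) + s * (u y t - u x t)))"
    proof (rule ident_lemma[OF gx gy])
      show "ut x t = l0 * f0 * (u (x + g0 * (1 - x)) t - u x t) + l1 * f1 * (u (x - g1 * x) t - u x t) - \<sigma> * (1 - x) * x * ux x t"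
        using px by linarith
      show "ut y t = l0 * f0 * (u (y + g0 * (1 - y)) t - u y t) + l1 * f1 * (u (y - g1 * y) t - u y t) - \<sigma> * (1 - y) * y * ux y t"
        using py by linarith
      show "c = \<sigma> - l0 * g0 * f0 - l1 * g1 * f1" unfolding c_def \<sigma>_def by simp
    qed
    have "0 \<le> p * (c * E) * (y - x) + s * (ut y t - ut x t)"
      unfolding ident using Mx0 Mx1 ps xy assms(1-5) unfolding \<sigma>_def E_def
      by (intro add_nonneg_nonneg mult_nonneg_nonneg) auto
    thus "\<exists>D\<ge>0. ((\<lambda>\<tau>. p * exp (c * \<tau>) * (y - x) + s * (u y \<tau> - u x \<tau>)) has_real_derivative D) (at t)"
      using dt by blast
  qed
  show ?thesis
  proof (intro allI impI ballI conjI)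
    fix t x :: real assume t: "t > 0" and x: "x \<in> {0..1}"
    show "0 \<le> ux x t"
      by (rule mono_deriv[OF dxw[OF x] x]) (use t gen[of 0 1] in auto)
    have "((\<lambda>\<xi>. exp (c * t) * \<xi> - u \<xi> t) has_real_derivative exp (c * t) - ux x t) (at x within {0..1})"
      using dxw[OF x] t by (auto intro!: derivative_eq_intros)
    hence "0 \<le> exp (c * t) - ux x t"
    proof (rule mono_deriv[OF _ x])
      fix a b :: real assume "0 \<le> a" "a \<le> b" "b \<le> 1"
      thus "exp (c * t) * a - u a t \<le> exp (c * t) * b - u b t"
        using gen[of 1 "-1" a b t] t by (simp add: algebra_simps)
    qed
    thus "ux x t \<le> exp (((f0 - f1) - (l0 * g0) * f0 - (l1 * g1) * f1) * t)" unfolding c_def by simp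
  qed
qed

end
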